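(* Let $d$ be a prime power, $\beta>0$, $0\le\eta\le 1$, and let $\rho^{\mathrm{iso}}_{a|x}(\eta)=\eta\frac1d|\phi^a_x\rangle\langle\phi^a_x|+(1-\eta)\frac{\mathbb{I}}{d^2}$, $a\in\{0,\dots,d-1\}$, $x\in\{0,\dots,d\}$, built from a complete set of $d+1$ mutually unbiased bases of $\mathbb{C}^d$. If $\eta>\Big(\sqrt d+\frac{1}{d+\sqrt d+1}\Big)^{-1}$, then $$\xi_{\max}\big(\{\rho^{\mathrm{iso}}_{a|x}(\eta)\}_{a,x}\big)\ \ge\ \frac{(d+1)\big(1+\eta(d-1)\big)}{d(1+\sqrt d)}\ >\ 1;$$ in particular for $\eta=1$, $\xi_{\max}\ge\frac{d+1}{\sqrt d+1}$.
   Context: A complete set of MUBs: $d+1$ orthonormal bases $\{|\phi^a_x\rangle\}_a$ of $\mathbb{C}^d$ with $|\langle\phi^a_x|\phi^b_y\rangle|=1/\sqrt d$ for $x\ne y$. For an assemblage $\{\rho_{a|x}\}$ (PSD operators $\rho_{a|x}=\operatorname{Tr}_A[(M_{a|x}\otimes\mathbb{I})\rho_{AB}]$) with $p(a|x)=\operatorname{Tr}\rho_{a|x}$ and Hermitian $H_{a|x}$ on $\mathbb{C}^d$, $Q_c(\{\rho_{a|x}\},\{H_{a|x}\})=\frac1n\sum_{a,x}[\operatorname{Tr}(H_{a|x}\rho_{a|x})-\operatorname{Tr}(H_{a|x}\gamma_{a|x})]$ with $\gamma_{a|x}=p(a|x)e^{-\beta H_{a|x}}/\operatorname{Tr}e^{-\beta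 H_{a|x}}$, $n$ the number of inputs. $\mathcal{L}$ is the set of unsteerable assemblages (those with $\rho_{a|x}=\int d\lambda\,p(\lambda)p(a|x,\lambda)\sigma_\lambda$), $\mathcal{L}_\rho=\{\{\sigma_{a|x}\}\in\mathcal{L}:\operatorname{Tr}\sigma_{a|x}=\operatorname{Tr}\rho_{a|x}\ \forall a,x\}$, and $\xi_{\max}(\{\rho_{a|x}\})=\sup_{\{H_{a|x}\}} Q_c(\{\rho_{a|x}\},\{H_{a|x}\})/\max_{\{\sigma_{a|x}\}\in\mathcal{L}_\rho}Q_c(\{\sigma_{a|x}\},\{H_{a|x}\})$, the supremum over Hermitian families with strictly positive denominator. *)

theory Defs
  imports "HOL-Analysis.Analysis" "HOL-Computational_Algebra.Primes"
    "Jordan_Normal_Form.Matrix" "Jordan_Normal_Form.Conjugate"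
begin

definition mtrace :: "complex mat \<Rightarrow> complex" where
  "mtrace A = (\<Sum>i<dim_row A. A $$ (i,i))"

definition herm :: "nat \<Rightarrow> complex mat \<Rightarrow> bool" where
  "herm n A \<longleftrightarrow> A \<in> carrier_mat n n \<and>
     (\<forall>i<n. \<forall>j<n. A $$ (i,j) = cnj (A $$ (j,i)))"

definition psd :: "nat \<Rightarrow> complex mat \<Rightarrow> bool" where
  "psd n A \<longleftrightarrow> herm n A \<and>
     (\<forall>v \<in> carrier_vec n. 0 \<le> Re (conjugate v \<bullet> (A *\<^sub>v v)))"

definition density :: "nat \<Rightarrow> complex mat \<Rightarrow> bool" where
  "density n A \<longleftrightarrow> psd n A \<and> mtrace A = 1"

definition mexp :: "nat \<Rightarrow> complex mat \<Rightarrow> complex mat" where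
  "mexp n A = mat n n (\<lambda>(i,j). \<Sum>k. (A ^\<^sub>m k) $$ (i,j) / of_nat (fact k))"

definition proj :: "nat \<Rightarrow> complex vec \<Rightarrow> complex mat" where
  "proj n v = mat n n (\<lambda>(i,j). v $ i * cnj (v $ j))"

definition gibbs :: "nat \<Rightarrow> real \<Rightarrow> real \<Rightarrow> complex mat \<Rightarrow> complex mat" where
  "gibbs n \<beta> p H =
     (complex_of_real p / mtrace (mexp n ((- complex_of_real \<beta>) \<cdot>\<^sub>m H))) \<cdot>\<^sub>m
       mexp n ((- complex_of_real \<beta>) \<cdot>\<^sub>m H)"

text \<open>Assemblages and Hamiltonian families are indexed as rho a x
  (outcome a < na, input x < nx).\<close>
definition Qc :: "nat \<Rightarrow> nat \<Rightarrow> nat \<Rightarrow> real \<Rightarrow>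
     (nat \<Rightarrow> nat \<Rightarrow> complex mat) \<Rightarrow> (nat \<Rightarrow> nat \<Rightarrow> complex mat) \<Rightarrow> real" where
  "Qc n na nx \<beta> \<rho> H = (1 / real nx) *
     (\<Sum>x<nx. \<Sum>a<na. Re (mtrace (H a x * \<rho> a x)
        - mtrace (H a x * gibbs n \<beta> (Re (mtrace (\<rho> a x))) (H a x))))"

definition unsteerable :: "nat \<Rightarrow> nat \<Rightarrow> nat \<Rightarrow> (nat \<Rightarrow> nat \<Rightarrow> complex mat) \<Rightarrow> bool" where
  "unsteerable n na nx \<sigma> \<longleftrightarrow>
     (\<exists>(\<Lambda>::nat set) (pl :: nat \<Rightarrow> real) (pax :: nat \<Rightarrow> nat \<Rightarrow> nat \<Rightarrow> real) sl.
        finite \<Lambda> \<and> (\<forall>l\<in>\<Lambda>. 0 \<le> pl l) \<and> sum pl \<Lambda> = 1 \<and>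
        (\<forall>l\<in>\<Lambda>. \<forall>x<nx. (\<forall>a<na. 0 \<le> pax a x l) \<and> (\<Sum>a<na. pax a x l) = 1) \<and>
        (\<forall>l\<in>\<Lambda>. density n (sl l)) \<and>
        (\<forall>x<nx. \<forall>a<na. \<sigma> a x \<in> carrier_mat n n \<and>
           (\<forall>i<n. \<forall>j<n. \<sigma> a x $$ (i,j) =
              (\<Sum>l\<in>\<Lambda>. complex_of_real (pl l * pax a x l) * sl l $$ (i,j)))))"

definition Lrho :: "nat \<Rightarrow> nat \<Rightarrow> nat \<Rightarrow> (nat \<Rightarrow> nat \<Rightarrow> complex mat)
     \<Rightarrow> (nat \<Rightarrow> nat \<Rightarrow> complex mat) set" where
  "Lrho n na nx \<rho> = {\<sigma>. unsteerable n na nx \<sigma> \<and>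
     (\<forall>x<nx. \<forall>a<na. mtrace (\<sigma> a x) = mtrace (\<rho> a x))}"

text \<open>max over L_rho of Q_c (the maximum is attained; we write Sup).\<close>
definition Qmax :: "nat \<Rightarrow> nat \<Rightarrow> nat \<Rightarrow> real \<Rightarrow>
     (nat \<Rightarrow> nat \<Rightarrow> complex mat) \<Rightarrow> (nat \<Rightarrow> nat \<Rightarrow> complex mat) \<Rightarrow> real" where
  "Qmax n na nx \<beta> \<rho> H = Sup ((\<lambda>\<sigma>. Qc n na nx \<beta> \<sigma> H) ` Lrho n na nx \<rho>)"

definition xi_max :: "nat \<Rightarrow> nat \<Rightarrow> nat \<Rightarrow> real \<Rightarrow>
     (nat \<Rightarrow> nat \<Rightarrow> complex mat) \<Rightarrow> ereal" where
  "xi_max n na nx \<beta> \<rho> = Sup {ereal (Qc n na nx \<beta> \<rho> H / Qmax n na nx \<beta> \<rho> H) | H.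
     (\<forall>x<nx. \<forall>a<na. herm n (H a x)) \<and> 0 < Qmax n na nx \<beta> \<rho> H}"

definition complete_MUB :: "nat \<Rightarrow> (nat \<Rightarrow> nat \<Rightarrow> complex vec) \<Rightarrow> bool" where
  "complete_MUB d \<phi> \<longleftrightarrow>
     (\<forall>x\<le>d. \<forall>a<d. \<phi> x a \<in> carrier_vec d) \<and>
     (\<forall>x\<le>d. \<forall>a<d. \<forall>b<d. conjugate (\<phi> x a) \<bullet> \<phi> x b = (if a = b then 1 else 0)) \<and>
     (\<forall>x\<le>d. \<forall>y\<le>d. x \<noteq> y \<longrightarrow> (\<forall>a<d. \<forall>b<d.
        cmod (conjugate (\<phi> x a) \<bullet> \<phi> y b) = 1 / sqrt (real d)))"

definition rho_iso :: "nat \<Rightarrow> (nat \<Rightarrow> nat \<Rightarrow> complex vec) \<Rightarrow> real \<Rightarrow> nat \<Rightarrow> nat \<Rightarrow> complex mat" where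
  "rho_iso d \<phi> \<eta> a x =
     complex_of_real (\<eta> / real d) \<cdot>\<^sub>m proj d (\<phi> x a)
     + complex_of_real ((1 - \<eta>) / (real d)^2) \<cdot>\<^sub>m 1\<^sub>m d"

definition prime_power :: "nat \<Rightarrow> bool" where
  "prime_power d \<longleftrightarrow> (\<exists>p k. prime p \<and> 1 \<le> k \<and> d = p ^ k)"

end

theory Submission
  imports Defs
begin

definition bf :: "nat \<Rightarrow> complex mat \<Rightarrow> (nat \<Rightarrow> complex) \<Rightarrow> (nat \<Rightarrow> complex) \<Rightarrow> complex" where
  "bf n s u w = (\<Sum>i<n. \<Sum>j<n. cnj (u i) * s $$ (i,j) * w j)"

lemma psd_bf: assumes "psd n s" shows "0 \<le> Re (bf n s u u)"
proof -
  have c: "s \<in> carrier_mat n n" using assms unfolding psd_def herm_def by blast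
  have "0 \<le> Re (conjugate (vec n u) \<bullet> (s *\<^sub>v vec n u))"
    using assms unfolding psd_def by auto
  also have "conjugate (vec n u) \<bullet> (s *\<^sub>v vec n u) = bf n s u u"
    using c unfolding bf_def scalar_prod_def
    by (auto simp: row_def scalar_prod_def sum_distrib_left mult.assoc atLeast0LessThan intro!: sum.cong)
  finally show ?thesis .
qed

lemma herm_bf: assumes "herm n s" shows "bf n s w u = cnj (bf n s u w)"
proof -
  have "bf n s w u = (\<Sum>i<n. \<Sum>j<n. cnj (w i) * s $$ (i,j) * u j)" by (simp add: bf_def)
  also have "\<dots> = (\<Sum>j<n. \<Sum>i<n. cnj (w i) * s $$ (i,j) * u j)" by (rule sum.swap)
  also have "\<dots> = (\<Sum>j<n. \<Sum>i<n. cnj (cnj (u j) * s $$ (j,i) * w i))"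
  proof (intro sum.cong refl)
    fix i j assume "i \<in> {..<n}" "j \<in> {..<n}"
    then have ij: "i < n" "j < n" by auto
    have "s $$ (j,i) = cnj (s $$ (i,j))" using assms ij unfolding herm_def by blast
    then show "cnj (w j) * s $$ (j,i) * u i = cnj (cnj (u i) * s $$ (i,j) * w j)"
      by (simp add: mult.commute mult.left_commute)
  qed
  also have "\<dots> = cnj (bf n s u w)" by (simp add: bf_def)
  finally show ?thesis .
qed

lemma bf_expand:
  "bf n s (\<lambda>i. u i + t * w i) (\<lambda>i. u i + t * w i)
   = bf n s u u + t * bf n s u w + cnj t * bf n s w u + cnj t * t * bf n s w w"
  unfolding bf_def by (simp add: sum.distrib sum_distrib_left ring_distribs mult_ac)

lemma bf_herm_real: assumes "herm n s" shows "Im (bf n s u u) = 0"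
  using herm_bf[OF assms, of u u] by (metis cnj.sel(2) complex_cnj_cancel_iff neg_equal_zero)

lemma bf_sum_right:
  "bf n s u (\<lambda>i. \<Sum>y\<in>Y. g y * w y i) = (\<Sum>y\<in>Y. g y * bf n s u (w y))"
proof -
  have "bf n s u (\<lambda>i. \<Sum>y\<in>Y. g y * w y i) = (\<Sum>i<n. \<Sum>j<n. \<Sum>y\<in>Y. g y * (cnj (u i) * s $$ (i,j) * w y j))"
    unfolding bf_def by (simp add: sum_distrib_left mult_ac)
  also have "\<dots> = (\<Sum>i<n. \<Sum>y\<in>Y. \<Sum>j<n. g y * (cnj (u i) * s $$ (i,j) * w y j))"
    by (rule sum.cong[OF refl], rule sum.swap)
  also have "\<dots> = (\<Sum>y\<in>Y. \<Sum>i<n. \<Sum>j<n. g y * (cnj (u i) * s $$ (i,j) * w y j))"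
    by (rule sum.swap)
  also have "\<dots> = (\<Sum>y\<in>Y. g y * bf n s u (w y))"
    unfolding bf_def by (simp add: sum_distrib_left)
  finally show ?thesis .
qed

lemma bf_sum_left:
  "bf n s (\<lambda>i. \<Sum>y\<in>Y. g y * w y i) u = (\<Sum>y\<in>Y. cnj (g y) * bf n s (w y) u)"
proof -
  have "bf n s (\<lambda>i. \<Sum>y\<in>Y. g y * w y i) u = (\<Sum>i<n. \<Sum>j<n. \<Sum>y\<in>Y. cnj (g y) * (cnj (w y i) * s $$ (i,j) * u j))"
    unfolding bf_def by (simp add: sum_distrib_left sum_distrib_right cnj_sum mult_ac)
  also have "\<dots> = (\<Sum>i<n. \<Sum>y\<in>Y. \<Sum>j<n. cnj (g y) * (cnj (w y i) * s $$ (i,j) * u j))"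
    by (rule sum.cong[OF refl], rule sum.swap)
  also have "\<dots> = (\<Sum>y\<in>Y. \<Sum>i<n. \<Sum>j<n. cnj (g y) * (cnj (w y i) * s $$ (i,j) * u j))"
    by (rule sum.swap)
  also have "\<dots> = (\<Sum>y\<in>Y. cnj (g y) * bf n s (w y) u)"
    unfolding bf_def by (simp add: sum_distrib_left)
  finally show ?thesis .
qed

lemma bf_unit_left: assumes "j < n" shows "bf n s (\<lambda>i. if i = j then 1 else 0) u = (\<Sum>i<n. s $$ (j,i) * u i)"
proof -
  have "bf n s (\<lambda>i. if i = j then 1 else 0) u = (\<Sum>i<n. if i = j then (\<Sum>k<n. s $$ (i,k) * u k) else 0)"
    unfolding bf_def by (rule sum.cong) auto
  also have "\<dots> = (\<Sum>i<n. s $$ (j,i) * u i)" using assms by simp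
  finally show ?thesis .
qed

lemma bf_unit_unit: "j < n \<Longrightarrow> bf n s (\<lambda>i. if i = j then 1 else 0) (\<lambda>i. if i = j then 1 else 0) = s $$ (j,j)"
  by (simp add: bf_unit_left if_distrib cong: if_cong)

lemma bf_cross:
  assumes "psd n s"
  shows "cmod (bf n s u w) \<le> (Re (bf n s u u) + Re (bf n s w w)) / 2"
proof (cases "bf n s u w = 0")
  case True
  then show ?thesis using psd_bf[OF assms, of u] psd_bf[OF assms, of w] by simp
next
  case False
  define z where "z = bf n s u w"
  have hz: "herm n s" using assms unfolding psd_def by auto
  have zpos: "cmod z > 0" using False z_def by simp
  define t where "t = - (cnj z / complex_of_real (cmod z))"
  have tz: "t * z = - complex_of_real (cmod z)"
  proof -
    have "cnj z * z = complex_of_real ((cmod z)^2)"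
      using complex_norm_square[of z] by (metis mult.commute)
    then show ?thesis unfolding t_def using zpos
      by (simp add: field_simps power2_eq_square)
  qed
  have tt: "cnj t * t = 1"
  proof -
    have "cnj t * t = complex_of_real ((cmod t)^2)"
      using complex_norm_square[of t] by (metis mult.commute)
    moreover have "cmod t = 1" unfolding t_def using zpos by (simp add: norm_divide)
    ultimately show ?thesis by simp
  qed
  have wu: "bf n s w u = cnj z" using herm_bf[OF hz, of w u] z_def by simp
  have "0 \<le> Re (bf n s (\<lambda>i. u i + t * w i) (\<lambda>i. u i + t * w i))" by (rule psd_bf[OF assms])
  also have "\<dots> = Re (bf n s u u) + Re (t * z) + Re (cnj (t * z)) + Re (bf n s w w)"
    unfolding bf_expand wu tt z_def by simp
  also have "\<dots> = Re (bf n s u u) - 2 * cmod z + Re (bf n s w w)"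
    unfolding tz by simp
  finally show ?thesis unfolding z_def by simp
qed

lemma core_bound:
  fixes v :: "nat \<Rightarrow> nat \<Rightarrow> complex"
  assumes psd: "psd n s" and tr: "Re (mtrace s) = 1" and n: "n > 0"
  and nv: "\<And>x. x \<le> n \<Longrightarrow> (\<Sum>j<n. cnj (v x j) * v x j) = 1"
  and ub: "\<And>x y. x \<le> n \<Longrightarrow> y \<le> n \<Longrightarrow> x \<noteq> y \<Longrightarrow> cmod (\<Sum>j<n. cnj (v x j) * v y j) = 1 / sqrt n"
  shows "(\<Sum>x\<le>n. Re (bf n s (v x) (v x))) \<le> 1 + sqrt n"
proof -
  have hs: "herm n s" using psd unfolding psd_def by blast
  have cs: "s \<in> carrier_mat n n" using hs unfolding herm_def by blast
  define C where "C = 1 + sqrt n"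
  have sq: "sqrt n \<ge> 1" using n by simp
  have Cpos: "C > 0" unfolding C_def using sq by linarith
  define b where "b x = Re (bf n s (v x) (v x))" for x
  have bnn: "b x \<ge> 0" for x unfolding b_def by (rule psd_bf[OF psd])
  define S where "S = (\<Sum>x\<le>n. b x)"
  define e :: "nat \<Rightarrow> nat \<Rightarrow> complex" where "e j = (\<lambda>i. if i = j then (1::complex) else 0)" for j
  define k :: "nat \<Rightarrow> nat \<Rightarrow> complex" where "k j = (\<lambda>i. \<Sum>x\<le>n. cnj (v x j) * v x i)" for j
  define G where "G y x = (\<Sum>j<n. cnj (v y j) * v x j)" for y x
  define r where "r = - 1 / C"
  have ee: "(\<Sum>j<n. bf n s (e j) (e j)) = mtrace s"
    unfolding e_def mtrace_def using cs by (simp add: bf_unit_unit)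
  have ek: "(\<Sum>j<n. bf n s (e j) (k j)) = (\<Sum>x\<le>n. bf n s (v x) (v x))"
  proof -
    have "(\<Sum>j<n. bf n s (e j) (k j)) = (\<Sum>j<n. \<Sum>x\<le>n. cnj (v x j) * (\<Sum>i<n. s $$ (j,i) * v x i))"
      unfolding k_def e_def by (simp add: bf_sum_right bf_unit_left)
    also have "\<dots> = (\<Sum>x\<le>n. \<Sum>j<n. cnj (v x j) * (\<Sum>i<n. s $$ (j,i) * v x i))"
      by (rule sum.swap)
    also have "\<dots> = (\<Sum>x\<le>n. bf n s (v x) (v x))"
      unfolding bf_def by (simp add: sum_distrib_left mult.assoc)
    finally show ?thesis .
  qed
  have ke: "bf n s (k j) (e j) = cnj (bf n s (e j) (k j))" for j by (rule herm_bf[OF hs])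
  have kk: "(\<Sum>j<n. bf n s (k j) (k j)) = (\<Sum>x\<le>n. \<Sum>y\<le>n. G y x * bf n s (v x) (v y))"
  proof -
    have "(\<Sum>j<n. bf n s (k j) (k j)) = (\<Sum>j<n. \<Sum>y\<le>n. \<Sum>x\<le>n. v x j * (cnj (v y j) * bf n s (v x) (v y)))"
      unfolding k_def bf_sum_right bf_sum_left by (simp add: sum_distrib_left mult_ac)
    also have "\<dots> = (\<Sum>y\<le>n. \<Sum>j<n. \<Sum>x\<le>n. v x j * (cnj (v y j) * bf n s (v x) (v y)))"
      by (rule sum.swap)
    also have "\<dots> = (\<Sum>y\<le>n. \<Sum>x\<le>n. \<Sum>j<n. v x j * (cnj (v y j) * bf n s (v x) (v y)))"
      by (rule sum.cong[OF refl], rule sum.swap)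
    also have "\<dots> = (\<Sum>x\<le>n. \<Sum>y\<le>n. \<Sum>j<n. v x j * (cnj (v y j) * bf n s (v x) (v y)))"
      by (rule sum.swap)
    also have "\<dots> = (\<Sum>x\<le>n. \<Sum>y\<le>n. G y x * bf n s (v x) (v y))"
      unfolding G_def by (simp add: sum_distrib_left sum_distrib_right mult_ac)
    finally show ?thesis .
  qed
  have S_eq: "Re (\<Sum>x\<le>n. bf n s (v x) (v x)) = S" unfolding S_def b_def by simp
  have pt: "Re (G y x * bf n s (v x) (v y)) \<le> (b x + b y) / (2 * sqrt n) + (if x = y then (1 - 1 / sqrt n) * b x else 0)"
    if "x \<le> n" "y \<le> n" for x y
  proof (cases "x = y")
    case True
    have "G y x = 1" using nv[OF that(1)] True unfolding G_def by simp
    then show ?thesis using True sq by (simp add: b_def field_simps)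
  next
    case False
    have "Re (G y x * bf n s (v x) (v y)) \<le> cmod (G y x * bf n s (v x) (v y))" by (rule complex_Re_le_cmod)
    also have "\<dots> = cmod (G y x) * cmod (bf n s (v x) (v y))" by (simp add: norm_mult)
    also have "\<dots> \<le> (1 / sqrt n) * ((b x + b y) / 2)"
    proof -
      have g: "cmod (G y x) = 1 / sqrt n" using ub[OF that(2) that(1)] False unfolding G_def by auto
      show ?thesis unfolding g b_def
        by (rule mult_left_mono[OF bf_cross[OF psd]]) simp
    qed
    finally show ?thesis using False by simp
  qed
  have Rr: "Re (\<Sum>j<n. bf n s (k j) (k j)) \<le> C * S"
  proof -
    have "Re (\<Sum>j<n. bf n s (k j) (k j)) = (\<Sum>x\<le>n. \<Sum>y\<le>n. Re (G y x * bf n s (v x) (v y)))"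
      unfolding kk by simp
    also have "\<dots> \<le> (\<Sum>x\<le>n. \<Sum>y\<le>n. (b x + b y) / (2 * sqrt n) + (if x = y then (1 - 1 / sqrt n) * b x else 0))"
      by (intro sum_mono pt) auto
    also have "\<dots> = (\<Sum>x\<le>n. \<Sum>y\<le>n. b x / (2 * sqrt n)) + (\<Sum>x\<le>n. \<Sum>y\<le>n. b y / (2 * sqrt n))
          + (\<Sum>x\<le>n. (1 - 1 / sqrt n) * b x)"
      by (simp add: sum.distrib add_divide_distrib)
    also have "\<dots> = (real n + 1) * S / (2 * sqrt n) + (real n + 1) * S / (2 * sqrt n) + (1 - 1 / sqrt n) * S"
      unfolding S_def by (simp add: sum_divide_distrib[symmetric] sum_distrib_left add.commute)
    also have "\<dots> = (1 + real n / sqrt n) * S"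
      using sq by (simp add: field_simps)
    also have "real n / sqrt n = sqrt n"
      by (metis real_div_sqrt of_nat_0_le_iff)
    finally show ?thesis unfolding C_def .
  qed
  have "0 \<le> (\<Sum>j<n. Re (bf n s (\<lambda>i. e j i + complex_of_real r * k j i) (\<lambda>i. e j i + complex_of_real r * k j i)))"
    by (intro sum_nonneg psd_bf[OF psd])
  also have "\<dots> = Re (\<Sum>j<n. bf n s (e j) (e j)) + 2 * r * Re (\<Sum>j<n. bf n s (e j) (k j))
       + r^2 * Re (\<Sum>j<n. bf n s (k j) (k j))"
    unfolding bf_expand ke by (simp add: sum.distrib sum_distrib_left power2_eq_square mult.assoc)
  also have "\<dots> = 1 + 2 * r * S + r^2 * Re (\<Sum>j<n. bf n s (k j) (k j))"
    unfolding ee ek S_eq tr by simp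
  also have "\<dots> \<le> 1 + 2 * r * S + r^2 * (C * S)"
    by (intro add_left_mono mult_left_mono Rr) auto
  also have "\<dots> = 1 - S / C"
    unfolding r_def using Cpos by (simp add: field_simps power2_eq_square)
  finally have "S \<le> C" using Cpos by (simp add: field_simps)
  then show ?thesis unfolding S_def b_def C_def .
qed

definition unitv :: "nat \<Rightarrow> complex vec \<Rightarrow> bool" where
  "unitv n v \<longleftrightarrow> v \<in> carrier_vec n \<and> conjugate v \<bullet> v = 1"

lemma unitv_sum: fixes v :: "complex vec"
  assumes "unitv n v" shows "(\<Sum>j<n. cnj (v $ j) * v $ j) = 1"
proof -
  have d: "dim_vec v = n" using assms unfolding unitv_def by (blast dest: carrier_vecD)
  have "conjugate v \<bullet> v = 1" using assms unitv_def by blast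
  then have "(\<Sum>i<n. conjugate v $ i * v $ i) = 1" unfolding scalar_prod_def d by (simp add: atLeast0LessThan)
  moreover have "(\<Sum>i<n. conjugate v $ i * v $ i) = (\<Sum>j<n. cnj (v $ j) * v $ j)"
    by (rule sum.cong) (auto simp: d)
  ultimately show ?thesis by simp
qed

lemma proj_carrier[simp]: "proj n v \<in> carrier_mat n n" unfolding proj_def by simp
lemma proj_dim[simp]: "dim_row (proj n v) = n" "dim_col (proj n v) = n" unfolding proj_def by simp_all

lemma herm_proj: "herm n (proj n v)" unfolding herm_def proj_def by simp

lemma trace_proj_mult:
  fixes v :: "complex vec"
  assumes X: "X \<in> carrier_mat n n"
  shows "mtrace (proj n v * X) = bf n X (\<lambda>i. v $ i) (\<lambda>i. v $ i)"
proof -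
  have "mtrace (proj n v * X) = (\<Sum>i<n. \<Sum>k<n. v $ i * cnj (v $ k) * X $$ (k,i))"
    unfolding mtrace_def using X
    by (simp add: proj_def scalar_prod_def row_def col_def atLeast0LessThan)
  also have "\<dots> = (\<Sum>k<n. \<Sum>i<n. v $ i * cnj (v $ k) * X $$ (k,i))" by (rule sum.swap)
  also have "\<dots> = bf n X (\<lambda>i. v $ i) (\<lambda>i. v $ i)"
    unfolding bf_def by (simp add: mult_ac)
  finally show ?thesis .
qed

lemma bf_proj: fixes v :: "complex vec"
  assumes "unitv n v"
  shows "bf n (proj n v) (\<lambda>i. v $ i) (\<lambda>i. v $ i) = 1"
proof -
  have "bf n (proj n v) (\<lambda>i. v $ i) (\<lambda>i. v $ i) = (\<Sum>i<n. \<Sum>j<n. (cnj (v $ i) * v $ i) * (cnj (v $ j) * v $ j))"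
    unfolding bf_def proj_def by (simp add: mult_ac)
  also have "\<dots> = (\<Sum>i<n. cnj (v $ i) * v $ i) * (\<Sum>j<n. cnj (v $ j) * v $ j)"
    by (simp add: sum_product)
  finally show ?thesis using unitv_sum[OF assms] by simp
qed

lemma bf_one: fixes v :: "complex vec"
  assumes "unitv n v"
  shows "bf n (1\<^sub>m n) (\<lambda>i. v $ i) (\<lambda>i. v $ i) = 1"
proof -
  have "bf n (1\<^sub>m n) (\<lambda>i. v $ i) (\<lambda>i. v $ i) = (\<Sum>i<n. \<Sum>j<n. if i = j then cnj (v $ i) * v $ j else 0)"
    unfolding bf_def by (intro sum.cong) auto
  also have "\<dots> = (\<Sum>i<n. cnj (v $ i) * v $ i)" by simp
  finally show ?thesis using unitv_sum[OF assms] by simp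
qed

lemma bf_smult: "A \<in> carrier_mat n n \<Longrightarrow> bf n (c \<cdot>\<^sub>m A) u w = c * bf n A u w"
  unfolding bf_def by (simp add: sum_distrib_left mult_ac)

lemma bf_add: "A \<in> carrier_mat n n \<Longrightarrow> B \<in> carrier_mat n n \<Longrightarrow> bf n (A + B) u w = bf n A u w + bf n B u w"
  unfolding bf_def by (simp add: sum.distrib algebra_simps)

lemma proj_sq: fixes v :: "complex vec"
  assumes "unitv n v" "i < n" "j < n"
  shows "(\<Sum>l<n. proj n v $$ (i,l) * proj n v $$ (l,j)) = proj n v $$ (i,j)"
proof -
  have "(\<Sum>l<n. proj n v $$ (i,l) * proj n v $$ (l,j)) = (\<Sum>l<n. (v $ i * cnj (v $ j)) * (cnj (v $ l) * v $ l))"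
    unfolding proj_def using assms by (intro sum.cong) (auto simp: mult_ac)
  also have "\<dots> = (v $ i * cnj (v $ j)) * (\<Sum>l<n. cnj (v $ l) * v $ l)" by (simp add: sum_distrib_left)
  finally show ?thesis using unitv_sum[OF assms(1)] assms unfolding proj_def by simp
qed

lemma pow_proj:
  fixes v :: "complex vec"
  assumes "unitv n v"
  shows "(c \<cdot>\<^sub>m proj n v) ^\<^sub>m k \<in> carrier_mat n n \<and>
    (\<forall>i<n. \<forall>j<n. ((c \<cdot>\<^sub>m proj n v) ^\<^sub>m k) $$ (i,j) =
        (if k = 0 then (if i = j then 1 else 0) else c ^ k * proj n v $$ (i,j)))"
proof (induction k)
  case 0
  then show ?case by simp
next
  case (Suc k)
  let ?A = "c \<cdot>\<^sub>m proj n v"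
  have cA: "?A \<in> carrier_mat n n" by simp
  have cS: "?A ^\<^sub>m Suc k \<in> carrier_mat n n"
    unfolding pow_mat.simps by (rule mult_carrier_mat[OF conjunct1[OF Suc.IH] cA])
  have "((?A ^\<^sub>m Suc k) $$ (i,j)) = c ^ Suc k * proj n v $$ (i,j)" if ij: "i < n" "j < n" for i j
  proof -
    have "(?A ^\<^sub>m Suc k) $$ (i,j) = (\<Sum>l<n. (?A ^\<^sub>m k) $$ (i,l) * ?A $$ (l,j))"
      using Suc.IH ij cA by (simp add: scalar_prod_def row_def col_def atLeast0LessThan)
    also have "\<dots> = (\<Sum>l<n. (if k = 0 then (if i = l then 1 else 0) else c ^ k * proj n v $$ (i,l)) * (c * proj n v $$ (l,j)))"
      using Suc.IH ij by (intro sum.cong) (auto simp: proj_def)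
    also have "\<dots> = c ^ Suc k * proj n v $$ (i,j)"
    proof (cases "k = 0")
      case True
      have "(\<Sum>l<n. (if k = 0 then (if i = l then 1 else 0) else c ^ k * proj n v $$ (i,l)) * (c * proj n v $$ (l,j)))
        = (\<Sum>l<n. if i = l then c * proj n v $$ (l,j) else 0)"
        using True by (intro sum.cong) auto
      then show ?thesis using ij True by simp
    next
      case False
      have "(\<Sum>l<n. (c ^ k * proj n v $$ (i,l)) * (c * proj n v $$ (l,j)))
          = c ^ Suc k * (\<Sum>l<n. proj n v $$ (i,l) * proj n v $$ (l,j))"
        by (simp add: sum_distrib_left mult_ac)
      then show ?thesis using False proj_sq[OF assms ij] by simp
    qed
    finally show ?thesis .
  qed
  then show ?case using cS by simp
qed

lemma mexp_proj:
  fixes v :: "complex vec"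
  assumes "unitv n v"
  shows "mexp n (c \<cdot>\<^sub>m proj n v) = 1\<^sub>m n + (exp c - 1) \<cdot>\<^sub>m proj n v"
proof (rule eq_matI)
  fix i j assume ij: "i < dim_row (1\<^sub>m n + (exp c - 1) \<cdot>\<^sub>m proj n v)" "j < dim_col (1\<^sub>m n + (exp c - 1) \<cdot>\<^sub>m proj n v)"
  then have ij: "i < n" "j < n" by auto
  let ?P = "proj n v $$ (i,j)"
  have trm: "((c \<cdot>\<^sub>m proj n v) ^\<^sub>m k) $$ (i,j) / of_nat (fact k)
     = ?P * (c ^ k /\<^sub>R fact k) + (if k = 0 then (if i = j then 1 else 0) - ?P else 0)" for k
    using pow_proj[OF assms, of c k] ij by (auto simp: scaleR_conv_of_real field_simps)
  have "(\<lambda>k. ?P * (c ^ k /\<^sub>R fact k) + (if k = 0 then (if i = j then 1 else 0) - ?P else 0))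
        sums (?P * exp c + ((if i = j then 1 else 0) - ?P))"
    by (intro sums_add sums_mult exp_converges) (rule sums_single[of 0 "\<lambda>_. (if i = j then 1 else 0) - ?P", simplified])
  then have "(\<Sum>k. ((c \<cdot>\<^sub>m proj n v) ^\<^sub>m k) $$ (i,j) / of_nat (fact k)) = ?P * exp c + ((if i = j then 1 else 0) - ?P)"
    unfolding trm by (rule sums_unique[symmetric])
  then show "mexp n (c \<cdot>\<^sub>m proj n v) $$ (i, j) = (1\<^sub>m n + (exp c - 1) \<cdot>\<^sub>m proj n v) $$ (i, j)"
    unfolding mexp_def using ij by (simp add: algebra_simps)
qed (auto simp: mexp_def)

lemma mtrace_add_smult:
  assumes "A \<in> carrier_mat n n" "B \<in> carrier_mat n n"
  shows "mtrace (a \<cdot>\<^sub>m A + b \<cdot>\<^sub>m B) = a * mtrace A + b * mtrace B"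
  using assms unfolding mtrace_def by (simp add: sum.distrib sum_distrib_left)

lemma mtrace_smult:
  assumes "A \<in> carrier_mat n n"
  shows "mtrace (a \<cdot>\<^sub>m A) = a * mtrace A"
  using assms unfolding mtrace_def by (simp add: sum_distrib_left)

lemma mtrace_proj: fixes v :: "complex vec"
  assumes "unitv n v" shows "mtrace (proj n v) = 1"
  using unitv_sum[OF assms] unfolding mtrace_def proj_def by (simp add: mult.commute)

lemma mtrace_one: "mtrace (1\<^sub>m n) = of_nat n"
  unfolding mtrace_def by simp

lemma gibbs_term:
  fixes v :: "complex vec"
  assumes u: "unitv n v"
  shows "mtrace (proj n v * gibbs n \<beta> p (proj n v))
     = complex_of_real (p * exp (- \<beta>) / (real n - 1 + exp (- \<beta>)))"
proof -
  define e where "e = exp (- \<beta>)"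
  have ee: "exp (- complex_of_real \<beta>) = complex_of_real e"
    unfolding e_def by (simp add: exp_of_real[symmetric])
  define M where "M = mexp n ((- complex_of_real \<beta>) \<cdot>\<^sub>m proj n v)"
  have M: "M = 1\<^sub>m n + (complex_of_real e - 1) \<cdot>\<^sub>m proj n v"
    unfolding M_def mexp_proj[OF u] ee ..
  have cM: "M \<in> carrier_mat n n" unfolding M by simp
  have trM: "mtrace M = of_nat n + (complex_of_real e - 1)"
    unfolding M mtrace_def using mtrace_proj[OF u] unfolding mtrace_def proj_def
    by (simp add: sum.distrib sum_distrib_left[symmetric])
  have bM: "bf n M (\<lambda>i. v $ i) (\<lambda>i. v $ i) = complex_of_real e"
    unfolding M by (simp add: bf_add bf_smult bf_one[OF u] bf_proj[OF u])
  have "mtrace (proj n v * gibbs n \<beta> p (proj n v))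
     = (complex_of_real p / mtrace M) * bf n M (\<lambda>i. v $ i) (\<lambda>i. v $ i)"
    unfolding gibbs_def M_def[symmetric]
    by (simp add: trace_proj_mult cM bf_smult)
  also have "\<dots> = complex_of_real (p * e / (real n - 1 + e))"
    unfolding trM bM by simp
  finally show ?thesis unfolding e_def .
qed

lemma bf_mix:
  assumes "\<And>i j. i < n \<Longrightarrow> j < n \<Longrightarrow> A $$ (i,j) = (\<Sum>l\<in>L. c l * B l $$ (i,j))"
  shows "bf n A u w = (\<Sum>l\<in>L. c l * bf n (B l) u w)"
proof -
  have "bf n A u w = (\<Sum>i<n. \<Sum>j<n. \<Sum>l\<in>L. c l * (cnj (u i) * B l $$ (i,j) * w j))"
    unfolding bf_def using assms by (intro sum.cong refl) (simp add: sum_distrib_left sum_distrib_right mult_ac)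
  also have "\<dots> = (\<Sum>i<n. \<Sum>l\<in>L. \<Sum>j<n. c l * (cnj (u i) * B l $$ (i,j) * w j))"
    by (rule sum.cong[OF refl], rule sum.swap)
  also have "\<dots> = (\<Sum>l\<in>L. \<Sum>i<n. \<Sum>j<n. c l * (cnj (u i) * B l $$ (i,j) * w j))"
    by (rule sum.swap)
  also have "\<dots> = (\<Sum>l\<in>L. c l * bf n (B l) u w)"
    unfolding bf_def by (simp add: sum_distrib_left)
  finally show ?thesis .
qed

lemma cscalar_sum:
  fixes a b :: "complex vec"
  assumes "a \<in> carrier_vec n" "b \<in> carrier_vec n"
  shows "conjugate a \<bullet> b = (\<Sum>j<n. cnj (a $ j) * b $ j)"
proof -
  have da: "dim_vec a = n" and db: "dim_vec b = n" using assms by (blast dest: carrier_vecD)+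
  have "conjugate a \<bullet> b = (\<Sum>j<n. conjugate a $ j * b $ j)"
    unfolding scalar_prod_def db by (simp add: atLeast0LessThan)
  also have "\<dots> = (\<Sum>j<n. cnj (a $ j) * b $ j)" by (rule sum.cong) (auto simp: da)
  finally show ?thesis .
qed

lemma qf_bf:
  fixes v :: "complex vec"
  assumes A: "A \<in> carrier_mat n n" and v: "v \<in> carrier_vec n"
  shows "conjugate v \<bullet> (A *\<^sub>v v) = bf n A (\<lambda>i. v $ i) (\<lambda>i. v $ i)"
proof -
  have dv: "dim_vec v = n" using v by (blast dest: carrier_vecD)
  have dA: "dim_row A = n" "dim_col A = n" using A by auto
  have "conjugate v \<bullet> (A *\<^sub>v v) = (\<Sum>i<n. conjugate v $ i * (A *\<^sub>v v) $ i)"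
    unfolding scalar_prod_def by (simp add: dA atLeast0LessThan)
  also have "\<dots> = (\<Sum>i<n. cnj (v $ i) * (\<Sum>j<n. A $$ (i,j) * v $ j))"
    by (rule sum.cong) (auto simp: dv dA row_def scalar_prod_def atLeast0LessThan)
  also have "\<dots> = bf n A (\<lambda>i. v $ i) (\<lambda>i. v $ i)"
    unfolding bf_def by (simp add: sum_distrib_left mult.assoc)
  finally show ?thesis .
qed

lemma real_aux1: assumes "d > 0"
  shows "(1 / (real d + 1)) * (X - (real d + 1) * real d * (g / real d)) = (1 / (real d + 1)) * X - g"
proof -
  have p: "real d + 1 > 0" by simp
  have a: "(real d + 1) * real d * (g / real d) = (real d + 1) * g" using assms by simp
  have b: "(1 / (real d + 1)) * ((real d + 1) * g) = g" using p by simp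
  show ?thesis unfolding a right_diff_distrib b ..
qed

lemma Qc_formula:
  fixes \<phi> :: "nat \<Rightarrow> nat \<Rightarrow> complex vec"
  assumes u: "\<And>x a. x \<le> d \<Longrightarrow> a < d \<Longrightarrow> unitv d (\<phi> x a)"
  and tr: "\<And>x a. x \<le> d \<Longrightarrow> a < d \<Longrightarrow> Re (mtrace (\<tau> a x)) = 1 / real d"
  and c: "\<And>x a. x \<le> d \<Longrightarrow> a < d \<Longrightarrow> \<tau> a x \<in> carrier_mat d d"
  and d: "d > 0"
  shows "Qc d d (d+1) \<beta> \<tau> (\<lambda>a x. proj d (\<phi> x a))
    = (1 / (real d + 1)) * (\<Sum>x<d+1. \<Sum>a<d. Re (bf d (\<tau> a x) (\<lambda>i. \<phi> x a $ i) (\<lambda>i. \<phi> x a $ i)))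
      - exp (- \<beta>) / (real d - 1 + exp (- \<beta>))"
proof -
  define g where "g = exp (- \<beta>) / (real d - 1 + exp (- \<beta>))"
  have each: "Re (mtrace (proj d (\<phi> x a) * \<tau> a x)
        - mtrace (proj d (\<phi> x a) * gibbs d \<beta> (Re (mtrace (\<tau> a x))) (proj d (\<phi> x a))))
      = Re (bf d (\<tau> a x) (\<lambda>i. \<phi> x a $ i) (\<lambda>i. \<phi> x a $ i)) - g / real d"
    if "x < d + 1" "a < d" for x a
  proof -
    have x: "x \<le> d" using that by simp
    show ?thesis
      unfolding trace_proj_mult[OF c[OF x that(2)]] gibbs_term[OF u[OF x that(2)]] tr[OF x that(2)] g_def
      by simp
  qed
  have "Qc d d (d+1) \<beta> \<tau> (\<lambda>a x. proj d (\<phi> x a))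
      = (1 / real (d+1)) * (\<Sum>x<d+1. \<Sum>a<d. Re (bf d (\<tau> a x) (\<lambda>i. \<phi> x a $ i) (\<lambda>i. \<phi> x a $ i)) - g / real d)"
  proof -
    have sums: "(\<Sum>x<d+1. \<Sum>a<d. Re (mtrace (proj d (\<phi> x a) * \<tau> a x)
        - mtrace (proj d (\<phi> x a) * gibbs d \<beta> (Re (mtrace (\<tau> a x))) (proj d (\<phi> x a)))))
      = (\<Sum>x<d+1. \<Sum>a<d. Re (bf d (\<tau> a x) (\<lambda>i. \<phi> x a $ i) (\<lambda>i. \<phi> x a $ i)) - g / real d)"
      by (intro sum.cong refl each) auto
    show ?thesis by (simp only: Qc_def sums)
  qed
  also have "\<dots> = (1 / (real d + 1)) * ((\<Sum>x<d+1. \<Sum>a<d. Re (bf d (\<tau> a x) (\<lambda>i. \<phi> x a $ i) (\<lambda>i. \<phi> x a $ i)))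
        - (real d + 1) * real d * (g / real d))"
    by (simp only: sum_subtractf sum_constant card_lessThan of_nat_add of_nat_1 mult.assoc)
  also have "\<dots> = (1 / (real d + 1)) * (\<Sum>x<d+1. \<Sum>a<d. Re (bf d (\<tau> a x) (\<lambda>i. \<phi> x a $ i) (\<lambda>i. \<phi> x a $ i))) - g"
    using d by (rule real_aux1)
  finally show ?thesis unfolding g_def .
qed

lemma Lrho_bound:
  fixes \<phi> :: "nat \<Rightarrow> nat \<Rightarrow> complex vec"
  assumes mub: "complete_MUB d \<phi>" and d: "d > 0"
  and \<sigma>: "unsteerable d d (d+1) \<sigma>"
  shows "(\<Sum>x<d+1. \<Sum>a<d. Re (bf d (\<sigma> a x) (\<lambda>i. \<phi> x a $ i) (\<lambda>i. \<phi> x a $ i))) \<le> 1 + sqrt d"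
proof -
  obtain \<Lambda> :: "nat set" and pl :: "nat \<Rightarrow> real" and pax :: "nat \<Rightarrow> nat \<Rightarrow> nat \<Rightarrow> real" and sl where
    fin: "finite \<Lambda>" and pl0: "\<forall>l\<in>\<Lambda>. 0 \<le> pl l" and pl1: "sum pl \<Lambda> = 1" and
    pax: "\<forall>l\<in>\<Lambda>. \<forall>x<d+1. (\<forall>a<d. 0 \<le> pax a x l) \<and> (\<Sum>a<d. pax a x l) = 1" and
    dens: "\<forall>l\<in>\<Lambda>. density d (sl l)" and
    ent: "\<forall>x<d+1. \<forall>a<d. \<sigma> a x \<in> carrier_mat d d \<and>
           (\<forall>i<d. \<forall>j<d. \<sigma> a x $$ (i,j) =
              (\<Sum>l\<in>\<Lambda>. complex_of_real (pl l * pax a x l) * sl l $$ (i,j)))"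
    using \<sigma> unfolding unsteerable_def by blast
  define R where "R l x a = Re (bf d (sl l) (\<lambda>i. \<phi> x a $ i) (\<lambda>i. \<phi> x a $ i))" for l x a
  have carr: "\<phi> x a \<in> carrier_vec d" if "x \<le> d" "a < d" for x a
    using mub that unfolding complete_MUB_def by blast
  have unit: "unitv d (\<phi> x a)" if "x \<le> d" "a < d" for x a
    using mub that carr[OF that] unfolding complete_MUB_def unitv_def by auto
  have step1: "Re (bf d (\<sigma> a x) (\<lambda>i. \<phi> x a $ i) (\<lambda>i. \<phi> x a $ i)) = (\<Sum>l\<in>\<Lambda>. pl l * pax a x l * R l x a)"
    if "x < d + 1" "a < d" for x a
  proof -
    have "bf d (\<sigma> a x) (\<lambda>i. \<phi> x a $ i) (\<lambda>i. \<phi> x a $ i)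
       = (\<Sum>l\<in>\<Lambda>. complex_of_real (pl l * pax a x l) * bf d (sl l) (\<lambda>i. \<phi> x a $ i) (\<lambda>i. \<phi> x a $ i))"
      by (rule bf_mix) (use ent that in blast)
    then show ?thesis unfolding R_def by (simp add: Re_sum)
  qed
  have perl: "(\<Sum>x<d+1. \<Sum>a<d. pax a x l * R l x a) \<le> 1 + sqrt d" if l: "l \<in> \<Lambda>" for l
  proof -
    have ex: "\<forall>x. \<exists>a. x \<le> d \<longrightarrow> a < d \<and> (\<forall>b<d. R l x b \<le> R l x a)"
    proof
      fix x
      have fin': "finite (R l x ` {..<d})" and ne: "R l x ` {..<d} \<noteq> {}" using d by auto
      obtain a where a: "a < d" "R l x a = Max (R l x ` {..<d})"
        using Max_in[OF fin' ne] by auto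
      have "\<forall>b<d. R l x b \<le> R l x a" using a Max_ge[OF fin'] by auto
      then show "\<exists>a. x \<le> d \<longrightarrow> a < d \<and> (\<forall>b<d. R l x b \<le> R l x a)" using a(1) by blast
    qed
    obtain am where am0: "\<forall>x. x \<le> d \<longrightarrow> am x < d \<and> (\<forall>b<d. R l x b \<le> R l x (am x))"
      using choice[OF ex] by blast
    have am: "am x < d \<and> (\<forall>b<d. R l x b \<le> R l x (am x))" if "x \<le> d" for x
      using am0 that by blast
    have "(\<Sum>x<d+1. \<Sum>a<d. pax a x l * R l x a) \<le> (\<Sum>x<d+1. \<Sum>a<d. pax a x l * R l x (am x))"
    proof (intro sum_mono)
      fix x a assume "x \<in> {..<d+1}" "a \<in> {..<d}"
      then have "x \<le> d" "a < d" "0 \<le> pax a x l" using pax l by auto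
      then show "pax a x l * R l x a \<le> pax a x l * R l x (am x)"
        using am by (intro mult_left_mono) auto
    qed
    also have "\<dots> = (\<Sum>x<d+1. R l x (am x))"
    proof (rule sum.cong[OF refl])
      fix x assume "x \<in> {..<d+1}"
      then have "(\<Sum>a<d. pax a x l) = 1" using pax l by auto
      then show "(\<Sum>a<d. pax a x l * R l x (am x)) = R l x (am x)"
        by (simp add: sum_distrib_right[symmetric])
    qed
    also have "\<dots> = (\<Sum>x\<le>d. Re (bf d (sl l) (\<lambda>j. \<phi> x (am x) $ j) (\<lambda>j. \<phi> x (am x) $ j)))"
      unfolding R_def by (simp add: lessThan_Suc_atMost)
    also have "\<dots> \<le> 1 + sqrt d"
    proof (rule core_bound[where v = "\<lambda>x j. \<phi> x (am x) $ j"])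
      show "psd d (sl l)" using dens l unfolding density_def by blast
      show "Re (mtrace (sl l)) = 1" using dens l unfolding density_def by simp
      show "0 < d" by fact
      show "(\<Sum>j<d. cnj (\<phi> x (am x) $ j) * \<phi> x (am x) $ j) = 1" if "x \<le> d" for x
        using unitv_sum[OF unit[OF that conjunct1[OF am[OF that]]]] .
      show "cmod (\<Sum>j<d. cnj (\<phi> x (am x) $ j) * \<phi> y (am y) $ j) = 1 / sqrt (real d)"
        if "x \<le> d" "y \<le> d" "x \<noteq> y" for x y
      proof -
        have ax: "am x < d" and ay: "am y < d" using am that by auto
        have "cmod (conjugate (\<phi> x (am x)) \<bullet> \<phi> y (am y)) = 1 / sqrt (real d)"
          using mub that ax ay unfolding complete_MUB_def by blast
        then show ?thesis using cscalar_sum[OF carr[OF that(1) ax] carr[OF that(2) ay]] by simp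
      qed
    qed
    finally show ?thesis .
  qed
  have "(\<Sum>x<d+1. \<Sum>a<d. Re (bf d (\<sigma> a x) (\<lambda>i. \<phi> x a $ i) (\<lambda>i. \<phi> x a $ i)))
      = (\<Sum>x<d+1. \<Sum>a<d. \<Sum>l\<in>\<Lambda>. pl l * (pax a x l * R l x a))"
    by (intro sum.cong refl) (simp add: step1 mult.assoc)
  also have "\<dots> = (\<Sum>x<d+1. \<Sum>l\<in>\<Lambda>. \<Sum>a<d. pl l * (pax a x l * R l x a))"
    by (rule sum.cong[OF refl], rule sum.swap)
  also have "\<dots> = (\<Sum>l\<in>\<Lambda>. \<Sum>x<d+1. \<Sum>a<d. pl l * (pax a x l * R l x a))"
    by (rule sum.swap)
  also have "\<dots> = (\<Sum>l\<in>\<Lambda>. pl l * (\<Sum>x<d+1. \<Sum>a<d. pax a x l * R l x a))"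
    by (simp only: sum_distrib_left)
  also have "\<dots> \<le> (\<Sum>l\<in>\<Lambda>. pl l * (1 + sqrt d))"
    by (intro sum_mono mult_left_mono perl) (use pl0 in auto)
  also have "\<dots> = 1 + sqrt d" using pl1 by (simp add: sum_distrib_right[symmetric])
  finally show ?thesis .
qed

lemma T_gt1:
  fixes d :: nat and \<eta> :: real
  assumes d: "d \<ge> 2" and eta: "\<eta> > 1 / (sqrt (real d) + 1 / (real d + sqrt (real d) + 1))"
  shows "(real d + 1) * (1 + \<eta> * (real d - 1)) / (real d * (1 + sqrt (real d))) > 1"
proof -
  define s where "s = sqrt (real d)"
  have ss: "s * s = real d" unfolding s_def by simp
  have s1: "s > 1" unfolding s_def using d by simp
  have D: "s + 1 / (real d + s + 1) = (s + 1) * (real d + 1) / (real d + s + 1)"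
  proof -
    have p: "real d + s + 1 > 0" using s1 by simp
    have "s + 1 / (real d + s + 1) = (s * (real d + s + 1) + 1) / (real d + s + 1)"
      using p by (simp add: field_simps)
    also have "s * (real d + s + 1) + 1 = (s + 1) * (real d + 1)"
      using ss by (simp add: algebra_simps)
    finally show ?thesis .
  qed
  have e1: "\<eta> > (real d + s + 1) / ((s + 1) * (real d + 1))"
    using eta unfolding s_def[symmetric] D by simp
  have pos: "(s + 1) * (real d + 1) > 0" using s1 by simp
  have e2: "\<eta> * ((s + 1) * (real d + 1)) > real d + s + 1"
    using e1 pos by (simp add: pos_divide_less_eq)
  have e3: "\<eta> * ((s + 1) * (real d + 1)) * (s - 1) > (real d + s + 1) * (s - 1)"
    using e2 s1 by (intro mult_strict_right_mono) auto
  have e4: "\<eta> * (real d - 1) * (real d + 1) > real d * s - 1"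
  proof -
    have f: "(s + 1) * (s - 1) = real d - 1" using ss by (simp add: algebra_simps)
    have "\<eta> * ((s + 1) * (real d + 1)) * (s - 1) = \<eta> * ((s + 1) * (s - 1)) * (real d + 1)"
      by (simp add: algebra_simps)
    then have A: "\<eta> * ((s + 1) * (real d + 1)) * (s - 1) = \<eta> * (real d - 1) * (real d + 1)"
      unfolding f .
    have "(real d + s + 1) * (s - 1) = real d * s - 1 + (s * s - real d)"
      by (simp add: algebra_simps)
    then have B: "(real d + s + 1) * (s - 1) = real d * s - 1" using ss by simp
    show ?thesis using e3 unfolding A B .
  qed
  have "(real d + 1) * (1 + \<eta> * (real d - 1)) > real d * (1 + s)"
    using e4 by (simp add: algebra_simps)
  moreover have "real d * (1 + s) > 0" using d s1 by simp
  ultimately show ?thesis unfolding s_def[symmetric] by simp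
qed

lemma ratio_aux:
  fixes a b g Q :: real
  assumes Q: "0 < Q" "Q \<le> b - g" and g: "0 < g" and ab: "b \<le> a" and b: "0 < b"
  shows "a / b \<le> (a - g) / Q"
proof -
  have bg: "b - g > 0" using Q by simp
  have "a / b \<le> (a - g) / (b - g)"
    using bg b g ab by (simp add: divide_simps) (simp add: algebra_simps mult_left_mono)
  also have "\<dots> \<le> (a - g) / Q"
    using Q ab bg by (intro divide_left_mono) auto
  finally show ?thesis .
qed

lemma bf_one_re: "0 \<le> Re (bf n (1\<^sub>m n) u u)"
proof -
  have "bf n (1\<^sub>m n) u u = (\<Sum>i<n. \<Sum>j<n. if i = j then cnj (u i) * u j else 0)"
    unfolding bf_def by (intro sum.cong) auto
  also have "\<dots> = (\<Sum>i<n. cnj (u i) * u i)" by simp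
  finally have "Re (bf n (1\<^sub>m n) u u) = (\<Sum>i<n. Re (cnj (u i) * u i))" by simp
  also have "\<dots> \<ge> 0" by (intro sum_nonneg) simp
  finally show ?thesis .
qed

lemma density_scaled_id:
  assumes d: "d > 0"
  shows "density d (complex_of_real (1 / real d) \<cdot>\<^sub>m 1\<^sub>m d)"
proof -
  let ?A = "complex_of_real (1 / real d) \<cdot>\<^sub>m 1\<^sub>m d"
  have cA: "?A \<in> carrier_mat d d" by simp
  have h: "herm d ?A" unfolding herm_def by auto
  have q: "0 \<le> Re (conjugate v \<bullet> (?A *\<^sub>v v))" if v: "v \<in> carrier_vec d" for v :: "complex vec"
  proof -
    have "conjugate v \<bullet> (?A *\<^sub>v v) = complex_of_real (1 / real d) * bf d (1\<^sub>m d) (\<lambda>i. v $ i) (\<lambda>i. v $ i)"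
      unfolding qf_bf[OF cA v] by (simp add: bf_smult)
    then show ?thesis using bf_one_re[of d "\<lambda>i. v $ i"] by simp
  qed
  have t: "mtrace ?A = 1" unfolding mtrace_smult[OF one_carrier_mat] mtrace_one using d by simp
  show ?thesis unfolding density_def psd_def using h q t by blast
qed

theorem mainTheorem4:
  fixes d :: nat and \<beta> \<eta> :: real and \<phi> :: "nat \<Rightarrow> nat \<Rightarrow> complex vec"
  assumes "prime_power d" and "\<beta> > 0" and "0 \<le> \<eta>" and "\<eta> \<le> 1"
    and "complete_MUB d \<phi>"
    and "\<eta> > 1 / (sqrt (real d) + 1 / (real d + sqrt (real d) + 1))"
  shows "ereal ((real d + 1) * (1 + \<eta> * (real d - 1)) / (real d * (1 + sqrt (real d))))
           \<le> xi_max d d (d + 1) \<beta> (rho_iso d \<phi> \<eta>)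
       \<and> (real d + 1) * (1 + \<eta> * (real d - 1)) / (real d * (1 + sqrt (real d))) > 1
       \<and> (\<eta> = 1 \<longrightarrow> ereal ((real d + 1) / (sqrt (real d) + 1))
              \<le> xi_max d d (d + 1) \<beta> (rho_iso d \<phi> \<eta>))"
proof -
  note pp = assms(1) and bpos = assms(2) and e0 = assms(3) and e1 = assms(4)
    and mub = assms(5) and eth = assms(6)
  obtain p k where p: "prime p" "1 \<le> k" "d = p ^ k" using pp unfolding prime_power_def by blast
  have "p \<ge> 2" using p(1) by (simp add: prime_ge_2_nat)
  then have d2: "d \<ge> 2" using p(2,3) by (metis le_trans power_increasing power_one_right one_le_numeral order.trans)
  have d0: "d > 0" using d2 by simp
  have dr: "real d > 0" using d0 by simp
  have dr2: "real d \<ge> 2" using d2 by simp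
  have carr: "\<phi> x a \<in> carrier_vec d" if "x \<le> d" "a < d" for x a
    using mub that unfolding complete_MUB_def by blast
  have unit: "unitv d (\<phi> x a)" if "x \<le> d" "a < d" for x a
    using mub that carr[OF that] unfolding complete_MUB_def unitv_def by auto
  define \<rho> where "\<rho> = rho_iso d \<phi> \<eta>"
  define H where "H = (\<lambda>a x. proj d (\<phi> x a))"
  define g where "g = exp (- \<beta>) / (real d - 1 + exp (- \<beta>))"
  define T where "T = (real d + 1) * (1 + \<eta> * (real d - 1)) / (real d * (1 + sqrt (real d)))"
  have q0: "exp (- \<beta>) > 0" by simp
  have q1: "exp (- \<beta>) < 1" using bpos by simp
  have g0: "g > 0"
  proof -
    have "real d - 1 + exp (- \<beta>) > 0" using dr2 q0 by linarith
    then show ?thesis unfolding g_def using q0 by (rule divide_pos_pos[rotated])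
  qed
  have g1: "g < 1 / real d"
  proof -
    have den: "real d - 1 + exp (- \<beta>) > 0" using dr2 q0 by linarith
    have "exp (- \<beta>) * real d < real d - 1 + exp (- \<beta>)"
    proof -
      have "exp (- \<beta>) * (real d - 1) < 1 * (real d - 1)" using q1 dr2 by (intro mult_strict_right_mono) auto
      then show ?thesis by (simp add: algebra_simps)
    qed
    then show ?thesis unfolding g_def using den dr by (simp add: divide_simps)
  qed
  have c\<rho>: "\<rho> a x \<in> carrier_mat d d" for a x unfolding \<rho>_def rho_iso_def by simp
  have tr\<rho>: "mtrace (\<rho> a x) = complex_of_real (1 / real d)" if "x \<le> d" "a < d" for x a
  proof -
    have r: "\<eta> / real d + (1 - \<eta>) / (real d)^2 * real d = 1 / real d"
      using dr by (simp add: field_simps power2_eq_square)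
    have "mtrace (\<rho> a x) = complex_of_real (\<eta> / real d) * 1 + complex_of_real ((1 - \<eta>) / (real d)^2) * of_nat d"
      unfolding \<rho>_def rho_iso_def mtrace_add_smult[OF proj_carrier one_carrier_mat]
        mtrace_proj[OF unit[OF that]] mtrace_one ..
    also have "\<dots> = complex_of_real (\<eta> / real d + (1 - \<eta>) / (real d)^2 * real d)" by simp
    finally show ?thesis unfolding r .
  qed
  have bf\<rho>: "Re (bf d (\<rho> a x) (\<lambda>i. \<phi> x a $ i) (\<lambda>i. \<phi> x a $ i)) = \<eta> / real d + (1 - \<eta>) / (real d)^2"
    if "x \<le> d" "a < d" for x a
    unfolding \<rho>_def rho_iso_def
    by (simp add: bf_add bf_smult bf_proj[OF unit[OF that]] bf_one[OF unit[OF that]])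
  have Q\<rho>: "Qc d d (d+1) \<beta> \<rho> H = (1 + \<eta> * (real d - 1)) / real d - g"
  proof -
    have "Qc d d (d+1) \<beta> \<rho> H = (1 / (real d + 1)) * (\<Sum>x<d+1. \<Sum>a<d. Re (bf d (\<rho> a x) (\<lambda>i. \<phi> x a $ i) (\<lambda>i. \<phi> x a $ i))) - g"
      unfolding H_def g_def by (rule Qc_formula) (use unit tr\<rho> c\<rho> d0 in auto)
    also have "(\<Sum>x<d+1. \<Sum>a<d. Re (bf d (\<rho> a x) (\<lambda>i. \<phi> x a $ i) (\<lambda>i. \<phi> x a $ i)))
        = (\<Sum>x<d+1. \<Sum>a<d. \<eta> / real d + (1 - \<eta>) / (real d)^2)"
      by (intro sum.cong refl bf\<rho>) auto
    also have "\<dots> = (real d + 1) * (real d * (\<eta> / real d + (1 - \<eta>) / (real d)^2))"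
      by (simp only: sum_constant card_lessThan of_nat_add of_nat_1)
    also have "(1 / (real d + 1)) * ((real d + 1) * (real d * (\<eta> / real d + (1 - \<eta>) / (real d)^2)))
        = (1 + \<eta> * (real d - 1)) / real d"
    proof -
      have p: "real d + 1 \<noteq> 0" using dr by simp
      have a1: "real d * (\<eta> / real d) = \<eta>" using dr by simp
      have a2: "real d * ((1 - \<eta>) / (real d)^2) = (1 - \<eta>) / real d" using dr by (simp add: power2_eq_square)
      have a3: "\<eta> + (1 - \<eta>) / real d = (1 + \<eta> * (real d - 1)) / real d" using dr by (simp add: field_simps)
      have a4: "real d * (\<eta> / real d + (1 - \<eta>) / (real d)^2) = (1 + \<eta> * (real d - 1)) / real d"
        unfolding distrib_left a1 a2 a3 ..
      show ?thesis unfolding a4 using p by simp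
    qed
    finally show ?thesis .
  qed
  define \<sigma>0 where "\<sigma>0 = (\<lambda>(a::nat) (x::nat). complex_of_real (1 / (real d)^2) \<cdot>\<^sub>m 1\<^sub>m d)"
  have \<sigma>0L: "\<sigma>0 \<in> Lrho d d (d+1) \<rho>"
  proof -
    have uns: "unsteerable d d (d+1) \<sigma>0"
      unfolding unsteerable_def
    proof (intro exI[of _ "{0::nat}"] exI[of _ "\<lambda>_. 1::real"] exI[of _ "\<lambda>_ _ _. 1 / real d"]
        exI[of _ "\<lambda>_. complex_of_real (1 / real d) \<cdot>\<^sub>m 1\<^sub>m d"] conjI)
      show "\<forall>x<d+1. \<forall>a<d. \<sigma>0 a x \<in> carrier_mat d d \<and>
           (\<forall>i<d. \<forall>j<d. \<sigma>0 a x $$ (i,j) =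
              (\<Sum>l\<in>{0}. complex_of_real (1 * (1 / real d)) * (complex_of_real (1 / real d) \<cdot>\<^sub>m 1\<^sub>m d) $$ (i,j)))"
        unfolding \<sigma>0_def by (simp add: power2_eq_square)
      show "\<forall>l\<in>{0}. density d (complex_of_real (1 / real d) \<cdot>\<^sub>m 1\<^sub>m d)"
        using density_scaled_id[OF d0] by simp
      show "\<forall>l\<in>{0::nat}. \<forall>x<d + 1. (\<forall>a<d. 0 \<le> 1 / real d) \<and> (\<Sum>a<d. 1 / real d) = 1"
        using dr by simp
    qed auto
    have "mtrace (\<sigma>0 a x) = mtrace (\<rho> a x)" if "x < d + 1" "a < d" for x a
    proof -
      have "mtrace (\<sigma>0 a x) = complex_of_real (1 / (real d)^2) * of_nat d"
        unfolding \<sigma>0_def by (simp add: mtrace_smult[OF one_carrier_mat] mtrace_one)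
      also have "\<dots> = complex_of_real (1 / real d)"
        using dr by (simp add: power2_eq_square)
      finally show ?thesis using tr\<rho>[of x a] that by simp
    qed
    then show ?thesis unfolding Lrho_def using uns by blast
  qed
  have Q\<sigma>0: "Qc d d (d+1) \<beta> \<sigma>0 H = 1 / real d - g"
  proof -
    have tr0: "Re (mtrace (\<sigma>0 a x)) = 1 / real d" if "x \<le> d" "a < d" for x a
    proof -
      have "mtrace (\<sigma>0 a x) = complex_of_real (1 / (real d)^2) * of_nat d"
        unfolding \<sigma>0_def by (simp add: mtrace_smult[OF one_carrier_mat] mtrace_one)
      then show ?thesis using dr by (simp add: power2_eq_square)
    qed
    have "Qc d d (d+1) \<beta> \<sigma>0 H = (1 / (real d + 1)) * (\<Sum>x<d+1. \<Sum>a<d. Re (bf d (\<sigma>0 a x) (\<lambda>i. \<phi> x a $ i) (\<lambda>i. \<phi> x a $ i))) - g"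
      unfolding H_def g_def by (rule Qc_formula) (use unit tr0 d0 in \<open>auto simp: \<sigma>0_def\<close>)
    also have "(\<Sum>x<d+1. \<Sum>a<d. Re (bf d (\<sigma>0 a x) (\<lambda>i. \<phi> x a $ i) (\<lambda>i. \<phi> x a $ i)))
        = (\<Sum>x<d+1. \<Sum>a<d. 1 / (real d)^2)"
      by (intro sum.cong refl) (auto simp: \<sigma>0_def bf_smult bf_one[OF unit])
    also have "\<dots> = (real d + 1) * (real d * (1 / (real d)^2))"
      by (simp only: sum_constant card_lessThan of_nat_add of_nat_1)
    also have "(1 / (real d + 1)) * ((real d + 1) * (real d * (1 / (real d)^2))) = 1 / real d"
      using dr by (simp add: field_simps power2_eq_square)
    finally show ?thesis .
  qed
  define U where "U = (1 / (real d + 1)) * (1 + sqrt (real d)) - g"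
  define Y where "Y = (\<lambda>\<sigma>. Qc d d (d+1) \<beta> \<sigma> H) ` Lrho d d (d+1) \<rho>"
  have Ybound: "y \<le> U" if yY: "y \<in> Y" for y
  proof -
    obtain \<sigma> where \<sigma>: "\<sigma> \<in> Lrho d d (d+1) \<rho>" and y: "y = Qc d d (d+1) \<beta> \<sigma> H"
      using yY unfolding Y_def by blast
    have uns: "unsteerable d d (d+1) \<sigma>" and trs: "\<forall>x<d+1. \<forall>a<d. mtrace (\<sigma> a x) = mtrace (\<rho> a x)"
      using \<sigma> unfolding Lrho_def by auto
    have cs: "\<sigma> a x \<in> carrier_mat d d" if "x \<le> d" "a < d" for x a
      using uns that unfolding unsteerable_def by auto
    have trs': "Re (mtrace (\<sigma> a x)) = 1 / real d" if "x \<le> d" "a < d" for x a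
      using trs tr\<rho>[OF that] that by auto
    have "y = (1 / (real d + 1)) * (\<Sum>x<d+1. \<Sum>a<d. Re (bf d (\<sigma> a x) (\<lambda>i. \<phi> x a $ i) (\<lambda>i. \<phi> x a $ i))) - g"
      unfolding y H_def g_def by (rule Qc_formula) (use unit trs' cs d0 in auto)
    also have "\<dots> \<le> (1 / (real d + 1)) * (1 + sqrt (real d)) - g"
      using Lrho_bound[OF mub d0 uns] by (intro diff_right_mono mult_left_mono) auto
    finally show ?thesis unfolding U_def .
  qed
  have Ybdd: "bdd_above Y" using Ybound by (intro bdd_aboveI) blast
  have Yne: "Y \<noteq> {}" unfolding Y_def using \<sigma>0L by blast
  have QM: "Qmax d d (d+1) \<beta> \<rho> H = Sup Y" unfolding Qmax_def Y_def ..
  have QMle: "Qmax d d (d+1) \<beta> \<rho> H \<le> U" unfolding QM by (rule cSup_least[OF Yne Ybound])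
  have QMge: "1 / real d - g \<le> Qmax d d (d+1) \<beta> \<rho> H"
    unfolding QM Q\<sigma>0[symmetric] Y_def by (rule cSup_upper) (use \<sigma>0L Ybdd Y_def in auto)
  have QMpos: "Qmax d d (d+1) \<beta> \<rho> H > 0" using QMge g1 by simp
  have herms: "\<forall>x<d+1. \<forall>a<d. herm d (H a x)" unfolding H_def by (simp add: herm_proj)
  have xi: "ereal (Qc d d (d+1) \<beta> \<rho> H / Qmax d d (d+1) \<beta> \<rho> H) \<le> xi_max d d (d + 1) \<beta> \<rho>"
    unfolding xi_max_def by (rule Sup_upper) (use herms QMpos in blast)
  have T1: "T > 1" unfolding T_def by (rule T_gt1[OF d2 eth])
  define a where "a = (1 + \<eta> * (real d - 1)) / real d"
  define b where "b = (1 + sqrt (real d)) / (real d + 1)"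
  have b0: "b > 0" unfolding b_def by (simp add: add_pos_nonneg)
  have Tab: "T = a / b" unfolding T_def a_def b_def using dr by (simp add: field_simps)
  have ab: "b \<le> a" using T1 b0 unfolding Tab by (simp add: divide_simps)
  have "T \<le> Qc d d (d+1) \<beta> \<rho> H / Qmax d d (d+1) \<beta> \<rho> H"
    unfolding Tab Q\<rho> a_def[symmetric]
    by (rule ratio_aux[OF QMpos _ g0 ab b0]) (use QMle in \<open>simp add: U_def b_def\<close>)
  then have main: "ereal T \<le> xi_max d d (d + 1) \<beta> \<rho>" using xi by (meson ereal_less_eq(3) order.trans)
  have eq1: "\<eta> = 1 \<Longrightarrow> T = (real d + 1) / (sqrt (real d) + 1)"
  proof -
    assume e: "\<eta> = 1"
    have "T = (real d * (real d + 1)) / (real d * (sqrt (real d) + 1))"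
      unfolding T_def e by (simp add: mult.commute add.commute)
    also have "\<dots> = (real d + 1) / (sqrt (real d) + 1)"
      using dr by (intro nonzero_mult_divide_mult_cancel_left) simp
    finally show ?thesis .
  qed
  show ?thesis using main T1 eq1 unfolding T_def \<rho>_def by auto
qed

end
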